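(* Let $H$ be a finite simple graph on $n\ge 2$ vertices and $G=w(H)$. Let $f_i$ denote the number of $i$-dimensional faces of $\operatorname{Ind}(G)$. Then $f_{n-2}\ge f_{n-1}$.
   Context: For a graph $H$ with vertex set $\{x_1,\dots,x_n\}$, the whiskered graph $w(H)$ has vertex set $\{x_1,\dots,x_n,y_1,\dots,y_n\}$ and edge set $E(H)\cup\{\{x_i,y_i\}: i=1,\dots,n\}$. The independence complex $\operatorname{Ind}(G)$ is the simplicial complex whose faces are the independent sets of $G$ (sets containing no edge); a face $F$ has dimension $|F|-1$. *)

theory Defs
  imports Main
begin

definition simple_graph :: "'a set \<Rightarrow> ('a \<Rightarrow> 'a \<Rightarrow> bool) \<Rightarrow> bool" where
  "simple_graph V E \<longleftrightarrow> finite V \<and> (\<forall>x y. E x y \<longrightarrow> x \<in> V \<and> y \<in> V)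
     \<and> (\<forall>x y. E x y \<longrightarrow> E y x) \<and> (\<forall>x. \<not> E x x)"

(* Whiskered graph w(H): vertices x_i = Inl i and whiskers y_i = Inr i. *)
definition whisker_verts :: "'a set \<Rightarrow> ('a + 'a) set" where
  "whisker_verts V = Inl ` V \<union> Inr ` V"

fun whisker_edge :: "'a set \<Rightarrow> ('a \<Rightarrow> 'a \<Rightarrow> bool) \<Rightarrow> ('a + 'a) \<Rightarrow> ('a + 'a) \<Rightarrow> bool" where
  "whisker_edge V E (Inl x) (Inl y) = E x y"
| "whisker_edge V E (Inl x) (Inr y) = (x = y \<and> x \<in> V)"
| "whisker_edge V E (Inr x) (Inl y) = (x = y \<and> x \<in> V)"
| "whisker_edge V E (Inr x) (Inr y) = False"

definition independence_complex :: "'v set \<Rightarrow> ('v \<Rightarrow> 'v \<Rightarrow> bool) \<Rightarrow> 'v set set" where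
  "independence_complex W R = {F. F \<subseteq> W \<and> (\<forall>u\<in>F. \<forall>v\<in>F. \<not> R u v)}"

definition f_vec :: "'v set set \<Rightarrow> nat \<Rightarrow> nat" where
  "f_vec K i = card {F \<in> K. card F = i + 1}"

end

theory Submission
  imports Defs
begin

definition gF :: "'a set \<Rightarrow> 'a \<Rightarrow> 'a set \<Rightarrow> ('a + 'a) set" where
  "gF V i T = Inl ` T \<union> Inr ` (V - T - {i})"

lemma gF_inj:
  assumes "gF V i T = gF V i' T'" "i \<in> V" "i' \<in> V" "i \<notin> T" "i' \<notin> T'"
  shows "i = i' \<and> T = T'"
proof -
  have T: "T = T'"
  proof
    show "T \<subseteq> T'" using assms(1) unfolding gF_def by (auto simp: set_eq_iff)
    show "T' \<subseteq> T" using assms(1) unfolding gF_def by (auto simp: set_eq_iff)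
  qed
  have "i = i'"
  proof (rule ccontr)
    assume "i \<noteq> i'"
    then have "Inr i \<in> gF V i' T'" using assms T unfolding gF_def by auto
    moreover have "Inr i \<notin> gF V i T" unfolding gF_def by auto
    ultimately show False using assms(1) by simp
  qed
  with T show ?thesis by simp
qed

lemma gF_card:
  assumes "finite V" "i \<in> V" "T \<subseteq> V - {i}"
  shows "card (gF V i T) = card V - 1"
proof -
  have fT: "finite T" using assms finite_subset by blast
  have "card (gF V i T) = card (Inl ` T :: ('a+'a) set) + card (Inr ` (V - T - {i}) :: ('a+'a) set)"
    unfolding gF_def by (rule card_Un_disjoint) (use assms fT in auto)
  also have "\<dots> = card T + card (V - T - {i})"
    by (simp add: card_image)
  also have "card (V - T - {i}) = card V - card T - 1"
  proof -
    have "V - T - {i} = V - (insert i T)" by auto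
    moreover have "card (insert i T) = card T + 1" proof -
      have "i \<notin> T" using assms by auto
      then show ?thesis using fT by simp
    qed
    moreover have "insert i T \<subseteq> V" using assms by auto
    ultimately show ?thesis using card_Diff_subset[of "insert i T" V] assms fT by auto
  qed
  also have "card T + (card V - card T - 1) = card V - 1"
  proof -
    have "card T \<le> card (V - {i})" using assms by (intro card_mono) auto
    also have "\<dots> = card V - 1" using assms by simp
    finally have "card T \<le> card V - 1" .
    then show ?thesis by simp
  qed
  finally show ?thesis .
qed

lemma gF_face:
  assumes "simple_graph V E" "i \<in> V" "T \<subseteq> V - {i}" "\<forall>x\<in>T. \<forall>y\<in>T. \<not> E x y"
  shows "gF V i T \<in> independence_complex (whisker_verts V) (whisker_edge V E)"
proof -
  have "\<forall>a\<in>gF V i T. \<forall>b\<in>gF V i T. \<not> whisker_edge V E a b"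
  proof (intro ballI)
    fix a b assume "a \<in> gF V i T" "b \<in> gF V i T"
    then show "\<not> whisker_edge V E a b"
      using assms unfolding gF_def by (cases a; cases b) auto
  qed
  moreover have "gF V i T \<subseteq> whisker_verts V"
    using assms unfolding gF_def whisker_verts_def by auto
  ultimately show ?thesis unfolding independence_complex_def by auto
qed

theorem mainTheorem2:
  fixes V :: "'a set" and E :: "'a \<Rightarrow> 'a \<Rightarrow> bool" and n :: nat
  assumes "simple_graph V E"
    and "card V = n"
    and "n \<ge> 2"
  shows "f_vec (independence_complex (whisker_verts V) (whisker_edge V E)) (n - 2)
       \<ge> f_vec (independence_complex (whisker_verts V) (whisker_edge V E)) (n - 1)"
proof -
  let ?K = "independence_complex (whisker_verts V) (whisker_edge V E)"
  define I where "I = {S. S \<subseteq> V \<and> (\<forall>x\<in>S. \<forall>y\<in>S. \<not> E x y)}"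
  have fV: "finite V" using assms(1) unfolding simple_graph_def by auto
  have fW: "finite (whisker_verts V)" using fV unfolding whisker_verts_def by auto
  have fI: "finite I" unfolding I_def using fV by auto
  define A where "A = {F \<in> ?K. card F = n - 1 + 1}"
  define B where "B = {F \<in> ?K. card F = n - 2 + 1}"
  have fB: "finite B" unfolding B_def independence_complex_def using fW
    by (auto intro: finite_subset[of _ "Pow (whisker_verts V)"])
  have A_sub: "A \<subseteq> (\<lambda>S. Inl ` S \<union> Inr ` (V - S)) ` I"
  proof
    fix F assume FA: "F \<in> A"
    define S where "S = {x. Inl x \<in> F}"
    define R where "R = {x. Inr x \<in> F}"
    have FK: "F \<subseteq> whisker_verts V" "\<forall>a\<in>F. \<forall>b\<in>F. \<not> whisker_edge V E a b"
      using FA unfolding A_def independence_complex_def by auto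
    have cF: "card F = n" using FA assms(3) unfolding A_def by auto
    have SV: "S \<subseteq> V" "R \<subseteq> V" using FK(1) unfolding S_def R_def whisker_verts_def by auto
    have Fe: "F = Inl ` S \<union> Inr ` R"
    proof
      show "F \<subseteq> Inl ` S \<union> Inr ` R"
      proof
        fix a assume "a \<in> F" then show "a \<in> Inl ` S \<union> Inr ` R"
          unfolding S_def R_def by (cases a) auto
      qed
      show "Inl ` S \<union> Inr ` R \<subseteq> F" unfolding S_def R_def by auto
    qed
    have dis: "S \<inter> R = {}"
    proof (rule ccontr)
      assume "S \<inter> R \<noteq> {}"
      then obtain x where "x \<in> S" "x \<in> R" by auto
      then have "Inl x \<in> F" "Inr x \<in> F" "x \<in> V" using SV unfolding S_def R_def by auto
      then show False using FK(2) by force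
    qed
    have fS: "finite S" "finite R" using SV fV finite_subset by auto
    have "card F = card S + card R"
      unfolding Fe by (subst card_Un_disjoint) (use fS in \<open>auto simp: card_image\<close>)
    then have cSR: "card (S \<union> R) = card V" using cF assms(2) dis fS
      by (simp add: card_Un_disjoint)
    have "S \<union> R = V" using SV cSR fV by (metis Un_subset_iff card_subset_eq)
    then have "R = V - S" using dis by auto
    moreover have "S \<in> I" unfolding I_def using SV FK(2) unfolding S_def by force
    ultimately show "F \<in> (\<lambda>S. Inl ` S \<union> Inr ` (V - S)) ` I" using Fe by auto
  qed
  have cA: "card A \<le> card I"
    using card_mono[OF finite_imageI[OF fI] A_sub] card_image_le[OF fI, of "\<lambda>S. Inl ` S \<union> Inr ` (V - S)"] by linarith
  obtain u v where uv: "u \<in> V" "v \<in> V" "u \<noteq> v"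
  proof -
    have "card V \<ge> 2" using assms by simp
    then obtain u where "u \<in> V" using fV by fastforce
    moreover have "card (V - {u}) \<ge> 1" using \<open>card V \<ge> 2\<close> \<open>u \<in> V\<close> fV by simp
    then have "V - {u} \<noteq> {}" by (metis card.empty not_one_le_zero)
    then obtain v where "v \<in> V - {u}" by blast
    ultimately show ?thesis using that by auto
  qed
  define \<psi> where "\<psi> S = (if u \<notin> S then gF V u S else if v \<notin> S then gF V v S
       else gF V v (S - {u, v}))" for S
  have psiB: "\<psi> S \<in> B" if "S \<in> I" for S
  proof -
    have SI: "S \<subseteq> V" "\<forall>x\<in>S. \<forall>y\<in>S. \<not> E x y" using that unfolding I_def by auto
    have n1: "n - 2 + 1 = card V - 1" using assms by simp
    have key: "gF V i T \<in> B" if "i \<in> V" "T \<subseteq> V - {i}" "T \<subseteq> S" for i T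
    proof -
      have "\<forall>x\<in>T. \<forall>y\<in>T. \<not> E x y" using SI(2) that(3) by blast
      then show ?thesis unfolding B_def n1
        using gF_face[OF assms(1) that(1,2)] gF_card[OF fV that(1,2)] by auto
    qed
    show ?thesis unfolding \<psi>_def
      using key[of u S] key[of v S] key[of v "S - {u,v}"] SI uv by auto
  qed
  have inj: "inj_on \<psi> I"
  proof
    fix S1 S2 assume S: "S1 \<in> I" "S2 \<in> I" and eq: "\<psi> S1 = \<psi> S2"
    have V1: "S1 \<subseteq> V" "S2 \<subseteq> V" using S unfolding I_def by auto
    show "S1 = S2"
    proof (cases "u \<in> S1"; cases "u \<in> S2"; cases "v \<in> S1"; cases "v \<in> S2")
    qed (use eq uv V1 in \<open>auto simp: \<psi>_def dest!: gF_inj\<close>)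
  qed
  have "card I \<le> card B"
    using card_inj_on_le[OF inj _ fB] psiB by auto
  with cA show ?thesis unfolding f_vec_def A_def B_def by simp
qed

end
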